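(* Let $0<q<1/2$, $p=1-q$, and for integers $z\ge1$ let $$P_{SN}(z)=1-\sum_{k=0}^{z-1}e^{-zq/p}\frac{(zq/p)^k}{k!}\left(1-\left(\frac qp\right)^{z-k}\right).$$ Then for every integer $z\ge1$, $$P_{SN}(z)<\frac{1}{1-\frac qp}\frac{1}{\sqrt{2\pi z}}e^{-\left(\frac qp-1-\log\frac qp\right)z}+\frac12e^{-\left(\frac qp-1-\log\frac qp\right)z}.$$
   Context: $P_{SN}(z)$ is Nakamoto's approximation of the probability of success of a double-spend attack after $z$ confirmations. *)

theory Defs
  imports Complex_Main
begin

text \<open>Nakamoto's approximation of the double-spend success probability after z confirmations,
  with attacker hash share q and honest share p = 1 - q.\<close>
definition P_SN :: "real \<Rightarrow> nat \<Rightarrow> real" where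
  "P_SN q z = (let p = 1 - q; lam = real z * q / p in
     1 - (\<Sum>k<z. exp (- lam) * lam ^ k / fact k * (1 - (q / p) ^ (z - k))))"

end

theory Submission imports Defs "HOL-Analysis.Analysis" begin

lemma ln_lower:
  fixes x :: real assumes x: "0 \<le> x" shows "2*x/(2+x) \<le> ln(1+x)"
proof -
  let ?f = "\<lambda>t::real. ln(1+t) - 2*t/(2+t)"
  have "?f 0 \<le> ?f x"
  proof (rule DERIV_nonneg_imp_nondecreasing[OF x])
    fix t :: real assume t: "0 \<le> t" "t \<le> x"
    have "(?f has_real_derivative (1/(1+t) - (2*(2+t) - 2*t)/(2+t)^2)) (at t)"
      using t by (auto intro!: derivative_eq_intros simp: power2_eq_square field_simps)
    moreover have "1/(1+t) - (2*(2+t) - 2*t)/(2+t)^2 = t^2/((1+t)*(2+t)^2)"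
    proof -
      have a: "1+t \<noteq> 0" "2+t \<noteq> 0" using t by auto
      have "1/(1+t) - (2*(2+t) - 2*t)/(2+t)^2 = ((2+t)^2 - (2*(2+t) - 2*t)*(1+t))/((1+t)*(2+t)^2)"
        using a by (simp add: diff_frac_eq)
      also have "(2+t)^2 - (2*(2+t) - 2*t)*(1+t) = t^2" by (simp add: power2_eq_square algebra_simps)
      finally show ?thesis .
    qed
    moreover have "0 \<le> t^2/((1+t)*(2+t)^2)" using t by simp
    ultimately show "\<exists>y. (?f has_real_derivative y) (at t) \<and> 0 \<le> y" by metis
  qed
  then show ?thesis by simp
qed

lemma ln_upper:
  fixes x :: real assumes x: "0 \<le> x" shows "ln(1+x) \<le> x - x^2/2 + x^3/3"
proof -
  let ?f = "\<lambda>t::real. t - t^2/2 + t^3/3 - ln(1+t)"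
  have "?f 0 \<le> ?f x"
  proof (rule DERIV_nonneg_imp_nondecreasing[OF x])
    fix t :: real assume t: "0 \<le> t" "t \<le> x"
    have "(?f has_real_derivative (1 - t + t^2 - 1/(1+t))) (at t)"
      using t by (auto intro!: derivative_eq_intros simp: power2_eq_square field_simps)
    moreover have "0 \<le> 1 - t + t^2 - 1/(1+t)"
      using t by (simp add: field_simps power2_eq_square)
    ultimately show "\<exists>y. (?f has_real_derivative y) (at t) \<and> 0 \<le> y" by blast
  qed
  then show ?thesis by simp
qed

definition sf :: "nat \<Rightarrow> real" where
  "sf n = ln (fact n) + real n - (real n + 1/2) * ln (real n)"

lemma sf_diff:
  assumes n: "n \<ge> 1"
  shows "sf n - sf (Suc n) = (real n + 1/2) * ln (1 + 1/real n) - 1"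
proof -
  have f: "ln (fact (Suc n) :: real) = ln (real (Suc n)) + ln (fact n)"
    by (simp add: ln_mult)
  have l: "ln (1 + 1/real n) = ln (real (Suc n)) - ln (real n)"
  proof -
    have "1 + 1/real n = real (Suc n) / real n" using n by (simp add: field_simps)
    then show ?thesis using n by (simp add: ln_div)
  qed
  show ?thesis unfolding sf_def f l by (simp add: algebra_simps)
qed

lemma sf_dec:
  assumes n: "n \<ge> 1"
  shows "sf (Suc n) \<le> sf n"
proof -
  have "2*(1/real n)/(2+1/real n) \<le> ln (1 + 1/real n)" by (rule ln_lower) simp
  moreover have "2*(1/real n)/(2+1/real n) = 1 / (real n + 1/2)" using n by (simp add: field_simps)
  ultimately have "1 \<le> (real n + 1/2) * ln (1 + 1/real n)"
    using n by (simp add: field_simps)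
  then show ?thesis using sf_diff[OF n] by simp
qed

lemma sf_inc:
  assumes n: "n \<ge> 1"
  shows "sf n - sf (Suc n) \<le> 1/(2*real n) - 1/(2*real (Suc n))"
proof -
  define y where "y = 1/real n"
  have y: "0 \<le> y" by (simp add: y_def)
  have "ln (1+y) \<le> y - y^2/2 + y^3/3" by (rule ln_upper[OF y])
  then have "(real n + 1/2) * ln (1+y) \<le> (real n + 1/2) * (y - y^2/2 + y^3/3)"
    by (intro mult_left_mono) auto
  also have "(real n + 1/2) * (y - y^2/2 + y^3/3) - 1 \<le> 1/(2*real n) - 1/(2*real (Suc n))"
  proof -
    have nn: "real n \<ge> 1" using n by simp
    have "(real n + 1/2) * (y - y^2/2 + y^3/3) - 1 = 1/(12 * real n^2) + 1/(6*real n^3)"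
      using nn by (simp add: y_def field_simps power2_eq_square power3_eq_cube)
    also have "\<dots> \<le> 1/(2*real n) - 1/(2*real (Suc n))"
    proof -
      have "0 \<le> real n * ((5 * real n + 2) * (real n - 1))" using nn by simp
      then have "real n * 4 + real n * (real n * 6) \<le> real n * (real n * (real n * 10))"
        by (simp add: algebra_simps)
      then have h: "(real n + 2) * (2 * real n * (real n + 1)) \<le> 1 * (12 * real n^3)"
        by (simp add: algebra_simps power3_eq_cube)
      have p: "0 < real n" using nn by simp
      have e1: "1/(12 * real n^2) + 1/(6*real n^3) = (real n + 2)/(12 * real n^3)"
        using p by (simp add: field_simps power2_eq_square power3_eq_cube)
      have e2: "1/(2*real n) - 1/(2*real (Suc n)) = 1/(2 * real n * (real n + 1))"
        using p by (simp add: field_simps)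
      have "(real n + 2)/(12 * real n^3) \<le> 1/(2 * real n * (real n + 1))"
      proof -
        have b: "0 < 12 * real n^3" "0 < 2 * real n * (real n + 1)" using p by auto
        show ?thesis using h b by (simp only: divide_le_eq le_divide_eq) (simp add: field_simps)
      qed
      then show ?thesis using e1 e2 by simp
    qed
    finally show ?thesis .
  qed
  ultimately show ?thesis using sf_diff[OF n] unfolding y_def by linarith
qed

lemma wallis_step0:
  fixes F G m x :: real assumes "F > 0" "G > 0" "m \<ge> 0"
  shows "(x * F)^4 / (G^2 * (2*m + 1)) * (4*(m+1)^2/((2*m + 1) * (2*m + 3)))
   = (2*x * ((m+1) * F))^4 / (((2*m + 2) * (2*m + 1) * G)^2 * (2*(m+1) + 1))"
proof -
  have a: "2*m+1 > 0" "2*m+3>0" "m+1>0" using assms by auto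
  have d1: "G^2 * (2*m + 1) * ((2*m + 1) * (2*m + 3)) \<noteq> 0" using a assms by auto
  have d2: "((2*m + 2) * (2*m + 1) * G)^2 * (2*(m+1) + 1) \<noteq> 0" using a assms by auto
  show ?thesis unfolding times_divide_times_eq frac_eq_eq[OF d1 d2] by algebra
qed

lemma wallis_step:
  fixes F G m x w :: real assumes "F > 0" "G > 0" "m \<ge> 0" and sdef: "w = m + 1"
  shows "(x * F)^4 / (G^2 * (2*m + 1)) * (4*w^2/((2*m + 1) * (2*m + 3)))
   = (2*x * (w * F))^4 / (((2*m + 2) * (2*m + 1) * G)^2 * (2*w + 1))"
  unfolding sdef by (rule wallis_step0[OF assms(1-3)])

lemma wallis_eq:
  "(\<Prod>k=1..n. 4*(real k)^2/(4*(real k)^2 - 1)) = (2^n * fact n)^4 / ((fact (2*n))^2 * (2*real n + 1))"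
proof (induction n)
  case 0
  then show ?case by simp
next
  case (Suc n)
  have f: "(fact (2 * Suc n) :: real) = (2*real n + 2) * (2*real n + 1) * fact (2*n)"
    by (simp add: algebra_simps)
  have ne: "4*(real (Suc n))^2 - 1 \<noteq> 0"
  proof -
    have "4*(real (Suc n))^2 \<ge> 4" by simp
    then show ?thesis by linarith
  qed
  have fe: "4*(real (Suc n))^2 - 1 = (2*real n + 1) * (2*real n + 3)"
    by (simp add: power2_eq_square algebra_simps)
  have "(\<Prod>k=1..Suc n. 4*(real k)^2/(4*(real k)^2 - 1))
      = (\<Prod>k=1..n. 4*(real k)^2/(4*(real k)^2 - 1)) * (4*(real (Suc n))^2/(4*(real (Suc n))^2 - 1))"
    by (simp add: atLeastAtMostSuc_conv mult.commute)
  also have "\<dots> = (2^n * fact n)^4 / ((fact (2*n))^2 * (2*real n + 1)) *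
                     (4*(real (Suc n))^2/((2*real n + 1) * (2*real n + 3)))"
    by (simp only: Suc.IH fe)
  also have "\<dots> = (2*2^n * (real (Suc n) * fact n))^4 / (((2*real n+2)*(2*real n+1)*fact(2*n))^2 * (2*real (Suc n)+1))"
    by (rule wallis_step) auto
  also have "\<dots> = (2^Suc n * fact (Suc n))^4 / ((fact (2*Suc n))^2 * (2*real (Suc n) + 1))"
    unfolding f by (simp add: algebra_simps)
  finally show ?case .
qed

lemma sf_lower:
  assumes n: "n \<ge> 1"
  shows "ln (2*pi) / 2 \<le> sf n"
proof -
  define T where "T k = sf (Suc k)" for k
  define U where "U k = T k - 1/(2*real (Suc k))" for k
  have decT: "decseq T"
    by (rule decseq_SucI) (simp add: T_def sf_dec)
  have incU: "incseq U"
  proof (rule incseq_SucI)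
    fix k
    have "sf (Suc k) - sf (Suc (Suc k)) \<le> 1/(2*real (Suc k)) - 1/(2*real (Suc (Suc k)))"
      by (rule sf_inc) simp
    then show "U k \<le> U (Suc k)" by (simp add: U_def T_def)
  qed
  have T0: "T 0 = 1" by (simp add: T_def sf_def)
  have Tb: "\<forall>i. 1/2 \<le> T i"
  proof
    fix i
    have "U 0 \<le> U i" using incU by (simp add: incseq_def)
    moreover have "0 \<le> 1/(2*real (Suc i))" by simp
    ultimately have "T 0 - 1/(2*real (Suc 0)) \<le> T i - 1/(2*real (Suc i))" by (simp add: U_def)
    moreover have "T 0 - 1/(2*real (Suc 0)) = 1/2" using T0 by simp
    ultimately show "1/2 \<le> T i" using \<open>0 \<le> 1/(2*real (Suc i))\<close> by linarith
  qed
  obtain l where lT: "T \<longlonglongrightarrow> l" and lle: "\<forall>i. l \<le> T i"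
    using decseq_convergent[OF decT Tb] by blast
  have ls: "sf \<longlonglongrightarrow> l"
    using lT unfolding T_def by (simp add: filterlim_sequentially_Suc)
  have ls2: "(\<lambda>n. sf (2*n)) \<longlonglongrightarrow> l"
  proof -
    have "strict_mono (\<lambda>n::nat. 2*n)" by (rule strict_monoI) simp
    from LIMSEQ_subseq_LIMSEQ[OF ls this] show ?thesis by (simp add: o_def)
  qed
  have A: "(\<lambda>n. 2*(2 * sf n - sf (2*n))) \<longlonglongrightarrow> 2*(2*l - l)"
    by (intro tendsto_intros ls ls2)
  define W where "W n = (\<Prod>k=1..n. 4*(real k)^2/(4*(real k)^2 - 1))" for n
  have Wl: "W \<longlonglongrightarrow> pi/2" unfolding W_def by (rule wallis)
  have q: "(\<lambda>n. 2 + inverse (real n)) \<longlonglongrightarrow> 2 + 0"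
    by (intro tendsto_intros lim_inverse_n)
  have q2: "(\<lambda>n. (2*real n + 1)/real n) \<longlonglongrightarrow> 2"
  proof (rule Lim_transform_eventually[OF q[simplified]])
    show "\<forall>\<^sub>F n in sequentially. 2 + inverse (real n) = (2 * real n + 1) / real n"
      unfolding eventually_sequentially
      by (rule exI[of _ 1]) (auto simp: field_simps)
  qed
  have B: "(\<lambda>n. ln (W n) + ln 2 + ln ((2*real n + 1)/real n)) \<longlonglongrightarrow> ln (pi/2) + ln 2 + ln 2"
    by (intro tendsto_intros Wl q2) auto
  have AB: "\<forall>\<^sub>F n in sequentially. ln (W n) + ln 2 + ln ((2*real n + 1)/real n) = 2*(2 * sf n - sf (2*n))"
    unfolding eventually_sequentially
  proof (rule exI[of _ 1], intro allI impI)
    fix n :: nat assume n: "1 \<le> n"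
    have p: "0 < real n" using n by simp
    have fp: "0 < (fact n :: real)" "0 < (fact (2*n) :: real)" by auto
    have "W n = (2^n * fact n)^4 / ((fact (2*n))^2 * (2*real n + 1))"
      unfolding W_def by (rule wallis_eq)
    then have lw: "ln (W n) = 4 * (real n * ln 2 + ln (fact n)) - (2 * ln (fact (2*n)) + ln (2*real n + 1))"
      using p fp by (simp add: ln_div ln_mult ln_realpow)
    have l2: "ln ((2*real n + 1)/real n) = ln (2*real n + 1) - ln (real n)"
      using p by (simp add: ln_div)
    have l3: "ln (real (2*n)) = ln 2 + ln (real n)"
      using p by (simp add: ln_mult)
    show "ln (W n) + ln 2 + ln ((2*real n + 1)/real n) = 2*(2 * sf n - sf (2*n))"
      unfolding lw l2 sf_def l3 by (simp add: algebra_simps)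
  qed
  have "ln (pi/2) + ln 2 + ln 2 = 2*(2*l - l)"
    using LIMSEQ_unique[OF Lim_transform_eventually[OF B AB] A] .
  moreover have "ln (pi/2) + ln 2 + ln 2 = ln (2*pi)"
    by (simp add: ln_div ln_mult)
  ultimately have "ln (2*pi) / 2 = l" by simp
  moreover have "l \<le> sf n"
    using lle[rule_format, of "n - 1"] n by (simp add: T_def)
  ultimately show ?thesis by simp
qed

lemma stirling_lower:
  assumes n: "n \<ge> 1"
  shows "exp (- real n) * real n ^ n / fact n \<le> 1 / sqrt (2*pi*real n)"
proof -
  have p: "0 < real n" using n by simp
  have s: "ln (2*pi) / 2 \<le> sf n" by (rule sf_lower[OF n])
  have lhs: "ln (sqrt (2*pi*real n) * real n ^ n * exp (- real n)) =
             ln (2*pi)/2 + ln (real n)/2 + real n * ln (real n) - real n"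
    using p by (simp add: ln_mult ln_realpow ln_sqrt)
  have "ln (sqrt (2*pi*real n) * real n ^ n * exp (- real n)) \<le> ln (fact n)"
    using s unfolding lhs sf_def by (simp add: algebra_simps)
  then have le: "sqrt (2*pi*real n) * real n ^ n * exp (- real n) \<le> fact n"
    using p by (subst (asm) ln_le_cancel_iff) auto
  have sp: "0 < sqrt (2*pi*real n)" using p by simp
  show ?thesis using le sp by (simp add: field_simps)
qed


lemma pair_le:
  "m + j + 1 = n \<Longrightarrow> real n ^ m / fact m \<le> real n ^ (m + 2*j + 1) / fact (m + 2*j + 1)"
proof (induction j arbitrary: m)
  case 0
  then have n: "real n = real m + 1" by auto
  have "real n ^ (m + 1) / fact (m + 1) = real n ^ m / fact m * (real n / (real m + 1))"
    by (simp add: field_simps)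
  also have "real n / (real m + 1) = 1" using n by simp
  finally show ?case by simp
next
  case (Suc j)
  define t where "t k = real n ^ k / fact k" for k
  have rec: "t (Suc k) = t k * (real n / (real k + 1))" for k
    by (simp add: t_def field_simps)
  have IH: "t (m+1) \<le> t (m + 2*j + 2)"
    using Suc.IH[of "m+1"] Suc.prems by (simp add: t_def)
  have n: "real n = real m + real j + 2" using Suc.prems by auto
  have np: "0 < real n" using n by simp
  have t0: "0 \<le> t k" for k by (simp add: t_def)
  have a: "t m = t (m+1) * ((real m + 1) / real n)"
    using rec[of m] np by (simp add: field_simps)
  have b: "t (m + 2*Suc j + 1) = t (m + 2*j + 2) * (real n / (real m + 2*real j + 3))"
  proof -
    have "m + 2*Suc j + 1 = Suc (m + 2*j + 2)" by simp
    then show ?thesis using rec[of "m + 2*j+2"] by (simp add: algebra_simps)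
  qed
  have c: "(real m + 1) / real n \<le> real n / (real m + 2*real j + 3)"
  proof -
    have "(real m + 1) * (real m + 2*real j + 3) \<le> real n * real n"
      unfolding n by (simp add: algebra_simps)
    then show ?thesis using np by (simp add: field_simps)
  qed
  have "t m \<le> t (m + 2*j + 2) * ((real m + 1) / real n)"
    unfolding a by (rule mult_right_mono[OF IH]) (use np in simp)
  also have "\<dots> \<le> t (m + 2*j + 2) * (real n / (real m + 2*real j + 3))"
    by (rule mult_left_mono[OF c t0])
  finally show ?case using b by (simp add: t_def)
qed

lemma exp_sums: "(\<lambda>k. (x::real)^k / fact k) sums exp x"
  using exp_converges[of x] by (simp add: divide_inverse mult.commute)

lemma ramanujan_half:
  assumes n: "n \<ge> 1"
  shows "(\<Sum>k<n. real n ^ k / fact k) < exp (real n) / 2"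
proof -
  define t where "t k = real n ^ k / fact k" for k
  have "(\<Sum>k<n. t k) = (\<Sum>j<n. t (n - Suc j))"
    by (rule sum.nat_diff_reindex[symmetric])
  also have "\<dots> \<le> (\<Sum>j<n. t (n + j))"
  proof (rule sum_mono)
    fix j assume j: "j \<in> {..<n}"
    have "t (n - Suc j) \<le> t ((n - Suc j) + 2*j + 1)"
      unfolding t_def by (rule pair_le) (use j in auto)
    moreover have "(n - Suc j) + 2*j + 1 = n + j" using j by auto
    ultimately show "t (n - Suc j) \<le> t (n + j)" by (simp add: add.commute)
  qed
  also have "(\<Sum>j<n. t (n + j)) = (\<Sum>k\<in>{n..<n+n}. t k)"
    using sum.shift_bounds_nat_ivl[of t 0 n n] by (simp add: atLeast0LessThan add.commute)
  finally have h: "(\<Sum>k<n. t k) \<le> (\<Sum>k\<in>{n..<n+n}. t k)" .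
  have split: "(\<Sum>k<n+n. t k) = (\<Sum>k<n. t k) + (\<Sum>k\<in>{n..<n+n}. t k)"
    using sum.atLeastLessThan_concat[of 0 n "n+n" t] by (simp add: atLeast0LessThan)
  have s: "t sums exp (real n)" unfolding t_def by (rule exp_sums)
  have "(\<Sum>k<n+n. t k) < suminf t"
  proof (rule sum_less_suminf)
    show "summable t" using s by (simp add: sums_iff)
    fix m show "0 < t m" using n by (simp add: t_def)
  qed
  also have "suminf t = exp (real n)" using s by (simp add: sums_iff)
  finally show ?thesis using h split unfolding t_def by simp
qed

lemma fact_pow_le: "fact z * real z ^ j \<le> (fact (z + j) :: real)"
proof (induction j)
  case 0 then show ?case by simp
next
  case (Suc j)
  have "fact z * real z ^ Suc j = (fact z * real z ^ j) * real z" by simp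
  also have "\<dots> \<le> fact (z + j) * real (Suc (z + j))"
    by (rule mult_mono[OF Suc.IH]) auto
  also have "\<dots> = fact (z + Suc j)" by simp
  finally show ?case .
qed

lemma tail_bound:
  fixes r :: real and z :: nat
  assumes r: "0 \<le> r" "r < 1" and a: "a = real z * r"
  shows "1 - (\<Sum>k<z. exp (-a) * a^k / fact k) \<le> exp (-a) * (a^z / fact z / (1 - r))"
proof -
  have a0: "0 \<le> a" using a r by simp
  have s1: "(\<lambda>i. a^(i+z) / fact (i+z)) sums (exp a - (\<Sum>k<z. a^k / fact k))"
    using sums_split_initial_segment[OF exp_sums[of a], of z] .
  have s2: "(\<lambda>i. a^z / fact z * r^i) sums (a^z / fact z * (1 / (1 - r)))"
    using sums_mult[OF geometric_sums[of r], of "a^z / fact z"] r by simp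
  have le: "a^(i+z) / fact (i+z) \<le> a^z / fact z * r^i" for i
  proof -
    have "a^(i+z) = a^z * real z ^ i * r^i" unfolding a by (simp add: power_add power_mult_distrib)
    moreover have "fact z * real z ^ i \<le> (fact (z + i) :: real)" by (rule fact_pow_le)
    ultimately have "a^(i+z) / fact (i+z) \<le> a^z * r^i * (real z ^ i / fact (z+i))"
      by (simp add: add.commute mult.commute mult.left_commute)
    also have "real z ^ i / fact (z+i) \<le> 1 / fact z"
      using \<open>fact z * real z ^ i \<le> fact (z + i)\<close> by (simp add: field_simps)
    then have "a^z * r^i * (real z ^ i / fact (z+i)) \<le> a^z * r^i * (1 / fact z)"
      by (rule mult_left_mono) (use a0 r in simp)
    finally show ?thesis by simp
  qed
  have "exp a - (\<Sum>k<z. a^k / fact k) \<le> a^z / fact z * (1 / (1 - r))"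
    by (rule sums_le[OF _ s1 s2]) (use le in auto)
  then have "exp (-a) * (exp a - (\<Sum>k<z. a^k / fact k)) \<le> exp (-a) * (a^z / fact z * (1 / (1 - r)))"
    by (rule mult_left_mono) simp
  moreover have "exp (-a) * (exp a - (\<Sum>k<z. a^k / fact k)) = 1 - (\<Sum>k<z. exp (-a) * a^k / fact k)"
    by (simp add: right_diff_distrib sum_distrib_left exp_minus field_simps)
  ultimately show ?thesis by simp
qed

theorem mainTheorem15:
  fixes q p :: real and z :: nat
  assumes "0 < q" and "q < 1/2" and "p = 1 - q" and "z \<ge> 1"
  shows "P_SN q z < 1 / (1 - q / p) * (1 / sqrt (2 * pi * real z))
                      * exp (- (q / p - 1 - ln (q / p)) * real z)
                    + 1/2 * exp (- (q / p - 1 - ln (q / p)) * real z)"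
proof -
  define r where "r = q / p"
  define a where "a = real z * r"
  have pp: "0 < p" using assms by simp
  have r0: "0 < r" using assms pp by (simp add: r_def)
  have r1: "r < 1" using assms pp by (simp add: r_def field_simps)
  have zp: "0 < real z" using assms by simp
  define E where "E = exp (- (r - 1 - ln r) * real z)"
  have E: "E = exp (-a) * exp (real z) * r ^ z"
  proof -
    have "- (r - 1 - ln r) * real z = -a + real z + real z * ln r"
      by (simp add: a_def algebra_simps)
    moreover have "exp (real z * ln r) = r ^ z"
      using exp_of_nat_mult[of z "ln r"] r0 by simp
    ultimately have "E = exp (-a + real z + real z * ln r)" unfolding E_def by simp
    also have "\<dots> = exp (-a) * exp (real z) * exp (real z * ln r)" by (simp only: exp_add)
    finally show ?thesis using \<open>exp (real z * ln r) = r ^ z\<close> by simp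
  qed
  have P: "P_SN q z = 1 - (\<Sum>k<z. exp (- a) * a ^ k / fact k * (1 - r ^ (z - k)))"
    unfolding P_SN_def a_def r_def using assms(3) by (simp add: Let_def)
  also have "\<dots> = (1 - (\<Sum>k<z. exp (- a) * a ^ k / fact k)) + (\<Sum>k<z. exp (- a) * a ^ k / fact k * r ^ (z - k))"
    by (simp add: right_diff_distrib sum_subtractf)
  also have "(\<Sum>k<z. exp (- a) * a ^ k / fact k * r ^ (z - k)) = exp (-a) * r ^ z * (\<Sum>k<z. real z ^ k / fact k)"
    unfolding sum_distrib_left
  proof (rule sum.cong[OF refl])
    fix k assume k: "k \<in> {..<z}"
    have "r ^ k * r ^ (z - k) = r ^ z" using k by (simp flip: power_add)
    then show "exp (- a) * a ^ k / fact k * r ^ (z - k) = exp (-a) * r ^ z * (real z ^ k / fact k)"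
      unfolding a_def power_mult_distrib by (simp add: field_simps)
  qed
  finally have P2: "P_SN q z = (1 - (\<Sum>k<z. exp (- a) * a ^ k / fact k)) + exp (-a) * r ^ z * (\<Sum>k<z. real z ^ k / fact k)" .
  have second: "exp (-a) * r ^ z * (\<Sum>k<z. real z ^ k / fact k) < 1/2 * E"
  proof -
    have "exp (-a) * r ^ z * (\<Sum>k<z. real z ^ k / fact k) < exp (-a) * r ^ z * (exp (real z) / 2)"
      by (rule mult_strict_left_mono[OF ramanujan_half[OF assms(4)]]) (use r0 in simp)
    then show ?thesis unfolding E by (simp add: field_simps)
  qed
  have first: "1 - (\<Sum>k<z. exp (- a) * a ^ k / fact k) \<le> 1 / (1 - r) * (1 / sqrt (2 * pi * real z)) * E"
  proof -
    have "1 - (\<Sum>k<z. exp (- a) * a ^ k / fact k) \<le> exp (-a) * (a^z / fact z / (1 - r))"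
      by (rule tail_bound) (use r0 r1 a_def in auto)
    also have "a^z / fact z = r ^ z * (real z ^ z / fact z)"
      unfolding a_def by (simp add: power_mult_distrib)
    also have "real z ^ z / fact z \<le> exp (real z) / sqrt (2 * pi * real z)"
    proof -
      have "exp (- real z) * real z ^ z / fact z \<le> 1 / sqrt (2 * pi * real z)"
        by (rule stirling_lower[OF assms(4)])
      then have "exp (real z) * (exp (- real z) * real z ^ z / fact z) \<le> exp (real z) * (1 / sqrt (2 * pi * real z))"
        by (rule mult_left_mono) simp
      then show ?thesis by (simp add: exp_minus field_simps)
    qed
    then have "exp (-a) * (r ^ z * (real z ^ z / fact z) / (1 - r)) \<le> exp (-a) * (r ^ z * (exp (real z) / sqrt (2 * pi * real z)) / (1 - r))"
      using r0 r1 by (intro mult_left_mono divide_right_mono) auto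
    also have "\<dots> = 1 / (1 - r) * (1 / sqrt (2 * pi * real z)) * E"
      unfolding E by (simp add: field_simps)
    finally show ?thesis .
  qed
  show ?thesis
    using P2 first second unfolding E_def r_def by linarith
qed

end
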